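(* Let $n \geq 2$, let $k \geq 2$ be an integer and let $(M_1, \dots, M_k) \in \mathrm{GL}_n(\mathbb{R})^k$. The following are equivalent. \begin{enumerate} \item There do not exist nonzero vectors $\mathbf v_1, \dots, \mathbf v_k \in \mathbb{R}^n \setminus\{\mathbf 0\}$, each with rationally dependent components, such that $M_1 \mathbf v_1 = M_2 \mathbf v_2 = \dots = M_k \mathbf v_k$. \item For all $\mathbf g_1, \dots, \mathbf g_k \in \mathbb{R}^n$ and all $(M_1', \dots, M_k') \in \mathrm{GL}_n(\mathbb{R})^k$ such that $\pi_k(M_1', \dots, M_k') = \pi_k(M_1, \dots, M_k)$, the set \[ \bigcup_{i=1}^k \left(M_i' \cdot \mathbb{Z}^n + \mathbf g_i\right) \] is a dense forest. \end{enumerate}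
   Context: A vector $\mathbf v \in \mathbb{R}^n$ has rationally dependent components if there is $\mathbf q \in \mathbb{Z}^n \setminus \{\mathbf 0\}$ with $\mathbf q \cdot \mathbf v = 0$; otherwise it has rationally independent components. A set $F \subset \mathbb{R}^n$ is a dense forest if for every $\varepsilon > 0$ there exists $V(\varepsilon) > 0$ such that every line segment in $\mathbb{R}^n$ of length $V(\varepsilon)$ intersects $\bigcup_{\mathbf f \in F} B_2(\mathbf f, \varepsilon)$, where $B_2(\mathbf f, \varepsilon)$ is the open Euclidean ball of radius $\varepsilon$ centred at $\mathbf f$. Let $\mathcal{S}_n^k := \left(\mathbb{R}^* \backslash \mathrm{GL}_n(\mathbb{R}) / \mathrm{GL}_n(\mathbb{Q})\right)^k$, where $\mathbb{R}^*$ (nonzero reals) acts by left multiplication as homothetic matrices and $\mathrm{GL}_n(\mathbb{Q})$ acts by right multiplication, and let $\pi_k : \mathrm{GL}_n(\mathbb{R})^k \to \mathcal{S}_n^k$ be the canonical projection. Thus $\pi_k(M_1', \dots, M_k') = \pi_k(M_1, \dots, M_k)$ iff for each $i$ there are $c_i \in \mathbb{R}^*$ and $Q_i \in \mathrm{GL}_n(\mathbb{Q})$ with $M_i' = c_i M_i Q_i$. *)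

theory Defs
  imports "HOL-Analysis.Analysis"
begin

definition int_vec :: "real ^ 'n \<Rightarrow> bool" where
  "int_vec z \<longleftrightarrow> (\<forall>i. z $ i \<in> \<int>)"

definition rat_dependent :: "real ^ 'n \<Rightarrow> bool" where
  "rat_dependent v \<longleftrightarrow> (\<exists>q. int_vec q \<and> q \<noteq> 0 \<and> q \<bullet> v = 0)"

definition dense_forest :: "(real ^ 'n) set \<Rightarrow> bool" where
  "dense_forest F \<longleftrightarrow> (\<forall>\<epsilon>>0. \<exists>V>0. \<forall>a b. dist a b = V \<longrightarrow>
      (\<exists>x\<in>closed_segment a b. \<exists>f\<in>F. dist x f < \<epsilon>))"

definition shifted_lattice :: "real ^ 'n ^ 'n \<Rightarrow> real ^ 'n \<Rightarrow> (real ^ 'n) set" where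
  "shifted_lattice M g = {M *v z + g | z. int_vec z}"

definition rat_GL :: "real ^ 'n ^ 'n \<Rightarrow> bool" where
  "rat_GL Q \<longleftrightarrow> invertible Q \<and> (\<forall>i j. Q $ i $ j \<in> \<rat>)"

text \<open>pi_k(M') = pi_k(M) for k-tuples indexed by 0..k-1.\<close>
definition same_class :: "nat \<Rightarrow> (nat \<Rightarrow> real ^ 'n ^ 'n) \<Rightarrow> (nat \<Rightarrow> real ^ 'n ^ 'n) \<Rightarrow> bool" where
  "same_class k M' M \<longleftrightarrow> (\<forall>i<k. \<exists>c Q. c \<noteq> 0 \<and> rat_GL Q \<and> M' i = c *\<^sub>R (M i ** Q))"

end

theory Submission imports Defs "HOL-Analysis.Kronecker_Approximation_Theorem" begin

lemma rat_indep_inj: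
  assumes "\<not> rat_dependent (u::real^'n)"
  shows "inj (\<lambda>j. u $ j)"
proof (rule injI)
  fix i j assume eq: "u$i = u$j"
  show "i = j"
  proof (rule ccontr)
    assume ij: "i \<noteq> j"
    define q :: "real^'n" where "q = axis i 1 - axis j 1"
    have "int_vec q" by (auto simp: int_vec_def axis_def q_def)
    moreover have "q $ i = 1" using ij by (simp add: q_def axis_def)
    hence "q \<noteq> 0" by auto
    moreover have "q \<bullet> u = 0" using eq by (simp add: q_def inner_diff_left inner_axis')
    ultimately show False using assms by (auto simp: rat_dependent_def)
  qed
qed

lemma rat_indep_module:
  fixes u :: "real^'n"
  assumes "\<not> rat_dependent u" "bij_betw h {..<N} (UNIV::'n set)"
  shows "module.independent (\<lambda>r. (*) (real_of_int r)) ((\<lambda>i. u $ h i) ` {..<N})"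
proof -
  interpret Modules.module "(\<lambda>r. (*) (real_of_int r))"
    by (simp add: Modules.module.intro distrib_left mult.commute)
  have inj: "inj (\<lambda>j. u $ j)" by (rule rat_indep_inj[OF assms(1)])
  show ?thesis
  proof
    assume "dependent ((\<lambda>i. u $ h i) ` {..<N})"
    then obtain t c v0 where t: "finite t" "t \<subseteq> (\<lambda>i. u $ h i) ` {..<N}"
      "(\<Sum>v\<in>t. real_of_int (c v) * v) = 0" "v0 \<in> t" "c v0 \<noteq> 0"
      by (auto simp: dependent_explicit)
    define q :: "real^'n" where "q = (\<chi> j. if u$j \<in> t then of_int (c (u$j)) else 0)"
    have "q \<bullet> u = (\<Sum>j\<in>UNIV. (if u$j \<in> t then of_int (c (u$j)) * u$j else 0))"
      by (auto simp: inner_vec_def q_def intro!: sum.cong)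
    also have "\<dots> = (\<Sum>j\<in>{j. u$j \<in> t}. of_int (c (u$j)) * u$j)"
      by (simp add: sum.inter_filter[symmetric])
    also have "\<dots> = (\<Sum>v\<in>t. real_of_int (c v) * v)"
    proof (rule sum.reindex_bij_betw)
      show "bij_betw (\<lambda>j. u $ j) {j. u $ j \<in> t} t"
        using inj t(2) unfolding bij_betw_def by (auto simp: inj_on_def image_iff)
    qed
    also have "\<dots> = 0" by (rule t(3))
    finally have q0: "q \<bullet> u = 0" .
    from t(2,4) obtain j0 where "v0 = u $ j0" by auto
    hence "q $ j0 \<noteq> 0" using t(4,5) by (simp add: q_def)
    hence "q \<noteq> 0" by auto
    moreover have "int_vec q" by (auto simp: int_vec_def q_def)
    ultimately show False using q0 assms(1) by (auto simp: rat_dependent_def)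
  qed
qed

lemma kron_vec:
  fixes u \<alpha> :: "real^'n"
  assumes "\<not> rat_dependent u" "e > 0"
  obtains t z where "int_vec z" "norm (t *\<^sub>R u - z - \<alpha>) < e"
proof -
  define N where "N = CARD('n)"
  obtain h where h0: "bij_betw h {0..<N} (UNIV::'n set)"
    using ex_bij_betw_nat_finite[of "UNIV::'n set"] by (auto simp: N_def)
  have h: "bij_betw h {..<N} UNIV" using h0 by (simp add: atLeast0LessThan)
  define \<theta> where "\<theta> = (\<lambda>i. u $ h i)"
  define \<beta> where "\<beta> = (\<lambda>i. \<alpha> $ h i)"
  have indp: "module.independent (\<lambda>r. (*) (real_of_int r)) (\<theta> ` {..<N})"
    unfolding \<theta>_def by (rule rat_indep_module[OF assms(1) h])
  have inj: "inj_on \<theta> {..<N}"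
    using rat_indep_inj[OF assms(1)] h unfolding \<theta>_def bij_betw_def inj_on_def inj_def by blast
  have N0: "N > 0" by (simp add: N_def)
  have eN: "e / N > 0" using N0 assms(2) by simp
  obtain t m where tm: "\<And>i. i < N \<Longrightarrow> \<bar>t * \<theta> i - of_int (m i) - \<beta> i\<bar> < e / N"
    using Kronecker_thm_1[OF indp inj eN, of \<beta>] by blast
  define z :: "real^'n" where "z = (\<chi> j. of_int (m (inv_into {..<N} h j)))"
  have iz: "int_vec z" by (simp add: int_vec_def z_def)
  have comp: "\<bar>(t *\<^sub>R u - z - \<alpha>) $ j\<bar> < e / N" for j
  proof -
    define i where "i = inv_into {..<N} h j"
    have i: "i < N" "h i = j" using h unfolding i_def
      by (metis bij_betw_def f_inv_into_f inv_into_into lessThan_iff UNIV_I)+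
    show ?thesis using tm[OF i(1)] i by (simp add: z_def \<theta>_def \<beta>_def i_def[symmetric])
  qed
  have "norm (t *\<^sub>R u - z - \<alpha>) \<le> (\<Sum>j\<in>UNIV. \<bar>(t *\<^sub>R u - z - \<alpha>) $ j\<bar>)"
    by (rule norm_le_l1_cart)
  also have "\<dots> < (\<Sum>j\<in>(UNIV::'n set). e / N)"
    by (rule sum_strict_mono) (use comp in auto)
  also have "\<dots> = e" using N0 by (simp add: N_def)
  finally show ?thesis using that iz by blast
qed

lemma kron_bounded:
  fixes u :: "real^'n"
  assumes "\<not> rat_dependent u" "e > 0"
  obtains T where "T \<ge> 0" "\<And>\<alpha>. \<exists>t z. \<bar>t\<bar> \<le> T \<and> int_vec z \<and> norm (t *\<^sub>R u - z - \<alpha>) < e"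
proof -
  have e2: "e/2 > 0" using assms(2) by simp
  have "\<forall>\<beta>. \<exists>t z. int_vec z \<and> norm (t *\<^sub>R u - z - \<beta>) < e/2"
    using kron_vec[OF assms(1) e2] by metis
  then obtain tf zf where tz: "\<And>\<beta>. int_vec (zf \<beta>) \<and> norm (tf \<beta> *\<^sub>R u - zf \<beta> - \<beta>) < e/2"
    by metis
  define K where "K = cbox (0::real^'n) 1"
  have "K \<subseteq> (\<Union>\<beta>\<in>K. ball \<beta> (e/2))" using e2 by auto
  then obtain C where C: "C \<subseteq> K" "finite C" "K \<subseteq> (\<Union>\<beta>\<in>C. ball \<beta> (e/2))"
    using compactE_image[of K K "\<lambda>\<beta>. ball \<beta> (e/2)"] unfolding K_def by auto
  define T where "T = (\<Sum>\<beta>\<in>C. \<bar>tf \<beta>\<bar>)"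
  show ?thesis
  proof (rule that)
    show "T \<ge> 0" by (simp add: T_def sum_nonneg)
    fix \<alpha> :: "real^'n"
    define fl :: "real^'n" where "fl = (\<chi> i. of_int \<lfloor>\<alpha>$i\<rfloor>)"
    have "\<alpha> - fl \<in> K" unfolding K_def mem_box_cart
      by (auto simp: fl_def) linarith
    then obtain \<beta> where \<beta>: "\<beta> \<in> C" "dist \<beta> (\<alpha> - fl) < e/2" using C(3) by auto
    have "\<bar>tf \<beta>\<bar> \<le> T" unfolding T_def by (rule member_le_sum) (use \<beta> C in auto)
    moreover have "int_vec (zf \<beta> - fl)" using tz[of \<beta>] by (auto simp: int_vec_def fl_def)
    moreover have "norm (tf \<beta> *\<^sub>R u - (zf \<beta> - fl) - \<alpha>) < e"
    proof -
      have "tf \<beta> *\<^sub>R u - (zf \<beta> - fl) - \<alpha> = (tf \<beta> *\<^sub>R u - zf \<beta> - \<beta>) + (\<beta> - (\<alpha> - fl))"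
        by (simp add: algebra_simps)
      also have "norm \<dots> \<le> norm (tf \<beta> *\<^sub>R u - zf \<beta> - \<beta>) + norm (\<beta> - (\<alpha> - fl))"
        by (rule norm_triangle_ineq)
      also have "\<dots> < e/2 + e/2" using tz[of \<beta>] \<beta>(2) by (simp add: dist_norm add_strict_mono)
      finally show ?thesis by simp
    qed
    ultimately show "\<exists>t z. \<bar>t\<bar> \<le> T \<and> int_vec z \<and> norm (t *\<^sub>R u - z - \<alpha>) < e" by blast
  qed
qed

lemma local_dir:
  fixes A M :: "real^'n^'n" and g d :: "real^'n"
  assumes MA: "M ** A = mat 1" and nd: "\<not> rat_dependent (A *v d)" and "\<epsilon> > 0"
  shows "\<exists>r>0. \<exists>T\<ge>0. \<forall>d'\<in>ball d r. \<forall>m. \<exists>t. \<bar>t\<bar> \<le> T \<and>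
            (\<exists>f\<in>shifted_lattice M g. dist (m + t *\<^sub>R d') f < \<epsilon>)"
proof -
  obtain KM where KM: "KM > 0" "\<And>x. norm (M *v x) \<le> norm x * KM"
    using bounded_linear.pos_bounded[OF matrix_vector_mul_bounded_linear[of M]] by blast
  obtain KA where KA: "KA > 0" "\<And>x. norm (A *v x) \<le> norm x * KA"
    using bounded_linear.pos_bounded[OF matrix_vector_mul_bounded_linear[of A]] by blast
  define \<delta> where "\<delta> = \<epsilon> / KM"
  have \<delta>: "\<delta> > 0" using KM assms(3) by (simp add: \<delta>_def)
  obtain T where T: "T \<ge> 0" "\<And>\<alpha>. \<exists>t z. \<bar>t\<bar> \<le> T \<and> int_vec z \<and> norm (t *\<^sub>R (A *v d) - z - \<alpha>) < \<delta>/2"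
    using kron_bounded[OF nd, of "\<delta>/2"] \<delta> by auto
  define r where "r = \<delta> / (2 * (T * KA + 1))"
  have TK: "T * KA \<ge> 0" using T KA by simp
  have r: "r > 0" using \<delta> TK by (simp add: r_def)
  have key: "T * KA * r < \<delta>/2"
  proof -
    have "T * KA * r = (\<delta>/2) * (T * KA / (T * KA + 1))" using TK by (simp add: r_def field_simps)
    also have "\<dots> < (\<delta>/2) * 1" using \<delta> TK by (intro mult_strict_left_mono) auto
    finally show ?thesis by simp
  qed
  show ?thesis
  proof (rule exI[of _ r], rule conjI[OF r], rule exI[of _ T], rule conjI[OF T(1)], intro ballI allI)
    fix d' m assume d': "d' \<in> ball d r"
    obtain t z where tz: "\<bar>t\<bar> \<le> T" "int_vec z"
      "norm (t *\<^sub>R (A *v d) - z - (- (A *v (m - g)))) < \<delta>/2"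
      using T(2) by blast
    define f where "f = M *v z + g"
    have fF: "f \<in> shifted_lattice M g" using tz(2) by (auto simp: shifted_lattice_def f_def)
    define y where "y = A *v (m + t *\<^sub>R d' - g) - z"
    have y_eq: "y = (t *\<^sub>R (A *v d) - z - (- (A *v (m - g)))) + t *\<^sub>R (A *v (d' - d))"
      by (simp add: y_def algebra_simps)
    have "norm (t *\<^sub>R (A *v (d' - d))) = \<bar>t\<bar> * norm (A *v (d' - d))" by simp
    also have "\<dots> \<le> T * (norm (d' - d) * KA)"
      using tz(1) KA(2)[of "d' - d"] by (intro mult_mono) auto
    also have "\<dots> \<le> T * (r * KA)"
      using d' T(1) KA(1) by (intro mult_left_mono mult_right_mono) (auto simp: dist_norm norm_minus_commute)
    also have "\<dots> < \<delta>/2" using key by (simp add: mult_ac)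
    finally have n2: "norm (t *\<^sub>R (A *v (d' - d))) < \<delta>/2" .
    have ny: "norm y < \<delta>" unfolding y_eq
      using norm_triangle_ineq[of "t *\<^sub>R (A *v d) - z - (- (A *v (m - g)))" "t *\<^sub>R (A *v (d' - d))"] tz(3) n2
      by linarith
    have "m + t *\<^sub>R d' - f = M *v y"
    proof -
      have "M *v y = (M ** A) *v (m + t *\<^sub>R d' - g) - M *v z"
        by (simp add: y_def matrix_vector_mult_diff_distrib matrix_vector_mul_assoc)
      thus ?thesis by (simp add: MA f_def)
    qed
    hence "dist (m + t *\<^sub>R d') f = norm (M *v y)" by (simp add: dist_norm)
    also have "\<dots> \<le> norm y * KM" by (rule KM(2))
    also have "\<dots> < \<delta> * KM" using ny KM(1) by simp
    also have "\<dots> = \<epsilon>" using KM(1) by (simp add: \<delta>_def)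
    finally show "\<exists>t. \<bar>t\<bar> \<le> T \<and> (\<exists>f\<in>shifted_lattice M g. dist (m + t *\<^sub>R d') f < \<epsilon>)"
      using tz(1) fF by blast
  qed
qed

lemma forest_main:
  fixes A M :: "nat \<Rightarrow> real^'n^'n" and g :: "nat \<Rightarrow> real^'n"
  assumes MA: "\<And>i. i<k \<Longrightarrow> M i ** A i = mat 1"
    and cov: "\<And>d. d \<noteq> 0 \<Longrightarrow> \<exists>i<k. \<not> rat_dependent (A i *v d)"
  shows "dense_forest (\<Union>i<k. shifted_lattice (M i) (g i))"
  unfolding dense_forest_def
proof (intro allI impI)
  fix \<epsilon> :: real assume \<epsilon>: "\<epsilon> > 0"
  define F where "F = (\<Union>i<k. shifted_lattice (M i) (g i))"
  have loc: "\<forall>d\<in>sphere (0::real^'n) 1. \<exists>r>0. \<exists>T\<ge>0. \<forall>d'\<in>ball d r. \<forall>m. \<exists>t. \<bar>t\<bar> \<le> T \<and>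
            (\<exists>f\<in>F. dist (m + t *\<^sub>R d') f < \<epsilon>)"
  proof
    fix d :: "real^'n" assume "d \<in> sphere 0 1"
    hence "d \<noteq> 0" by auto
    then obtain i where i: "i<k" "\<not> rat_dependent (A i *v d)" using cov by blast
    from local_dir[OF MA[OF i(1)] i(2) \<epsilon>, of "g i"] obtain r T where
      rT: "r > 0" "T \<ge> 0" "\<forall>d'\<in>ball d r. \<forall>m. \<exists>t. \<bar>t\<bar> \<le> T \<and>
            (\<exists>f\<in>shifted_lattice (M i) (g i). dist (m + t *\<^sub>R d') f < \<epsilon>)" by blast
    have "shifted_lattice (M i) (g i) \<subseteq> F" using i(1) by (auto simp: F_def)
    then show "\<exists>r>0. \<exists>T\<ge>0. \<forall>d'\<in>ball d r. \<forall>m. \<exists>t. \<bar>t\<bar> \<le> T \<and>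
            (\<exists>f\<in>F. dist (m + t *\<^sub>R d') f < \<epsilon>)" using rT by blast
  qed
  then obtain r T where rT: "\<And>d. d \<in> sphere 0 1 \<Longrightarrow> r d > 0 \<and> T d \<ge> 0 \<and>
      (\<forall>d'\<in>ball d (r d). \<forall>m. \<exists>t. \<bar>t\<bar> \<le> T d \<and> (\<exists>f\<in>F. dist (m + t *\<^sub>R d') f < \<epsilon>))"
    by metis
  have "sphere (0::real^'n) 1 \<subseteq> (\<Union>d\<in>sphere 0 1. ball d (r d))" using rT by force
  then obtain C where C: "C \<subseteq> sphere 0 1" "finite C" "sphere (0::real^'n) 1 \<subseteq> (\<Union>d\<in>C. ball d (r d))"
    using compactE_image[OF compact_sphere[of "0::real^'n" 1], of "sphere 0 1" "\<lambda>d. ball d (r d)"] by auto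
  define V where "V = 2 * (\<Sum>d\<in>C. T d) + 1"
  have S0: "(\<Sum>d\<in>C. T d) \<ge> 0" using C(1) rT by (intro sum_nonneg) auto
  have V: "V > 0" using S0 by (simp add: V_def)
  show "\<exists>V>0. \<forall>a b. dist a b = V \<longrightarrow> (\<exists>x\<in>closed_segment a b. \<exists>f\<in>F. dist x f < \<epsilon>)"
  proof (intro exI[of _ V] conjI V allI impI)
    fix a b :: "real^'n" assume ab: "dist a b = V"
    define d' where "d' = (1/V) *\<^sub>R (b - a)"
    have "norm d' = 1" using ab V by (simp add: d'_def dist_norm norm_minus_commute)
    then obtain d where d: "d \<in> C" "d' \<in> ball d (r d)" using C(3) by auto
    define m where "m = (1/2) *\<^sub>R (a + b)"
    obtain t f where tf: "\<bar>t\<bar> \<le> T d" "f \<in> F" "dist (m + t *\<^sub>R d') f < \<epsilon>"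
      using rT[of d] d C(1) by blast
    have "T d \<le> (\<Sum>d\<in>C. T d)" using C rT d(1) by (intro member_le_sum) auto
    hence tV: "\<bar>t\<bar> \<le> (V - 1) / 2" using tf(1) by (simp add: V_def)
    define u where "u = 1/2 + t / V"
    have u: "0 \<le> u" "u \<le> 1" using tV V by (auto simp: u_def field_simps abs_le_iff)
    have "m + t *\<^sub>R d' = (1 - u) *\<^sub>R a + u *\<^sub>R b"
      using V by (simp add: m_def d'_def u_def vec_eq_iff field_simps)
    hence "m + t *\<^sub>R d' \<in> closed_segment a b" using u by (auto simp: closed_segment_def)
    then show "\<exists>x\<in>closed_segment a b. \<exists>f\<in>F. dist x f < \<epsilon>" using tf by blast
  qed
qed


lemma rat_vec_dependent:
  fixes q v :: "real^'n"
  assumes "\<And>i. q $ i \<in> \<rat>" "q \<noteq> 0" "q \<bullet> v = 0"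
  shows "rat_dependent v"
proof -
  have "\<forall>i. \<exists>b::int. b > 0 \<and> of_int b * q $ i \<in> \<int>"
  proof
    fix i
    obtain a b where ab: "q $ i = of_int a / of_int b" "b > 0" using Rats_cases'[OF assms(1)[of i]] by metis
    hence "of_int b * q $ i = of_int a" by simp
    thus "\<exists>b::int. b > 0 \<and> of_int b * q $ i \<in> \<int>" using ab(2) by (metis Ints_of_int)
  qed
  then obtain b where b: "\<And>i. b i > (0::int) \<and> of_int (b i) * q $ i \<in> \<int>" by metis
  define D where "D = (\<Prod>i\<in>UNIV. b i)"
  have D0: "D \<noteq> 0" using b by (simp add: D_def) (metis less_irrefl)
  define q' where "q' = of_int D *\<^sub>R q"
  have "int_vec q'" unfolding int_vec_def
  proof
    fix i
    have "D = b i * (\<Prod>j\<in>UNIV - {i}. b j)" unfolding D_def by (rule prod.remove) auto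
    hence "q' $ i = of_int (\<Prod>j\<in>UNIV - {i}. b j) * (of_int (b i) * q $ i)"
      by (simp add: q'_def)
    thus "q' $ i \<in> \<int>" using b[of i] by (metis Ints_mult Ints_of_int of_int_prod)
  qed
  moreover have "q' \<noteq> 0" using D0 assms(2) by (simp add: q'_def)
  moreover have "q' \<bullet> v = 0" using assms(3) by (simp add: q'_def)
  ultimately show ?thesis by (auto simp: rat_dependent_def)
qed

lemma det_rat:
  fixes A :: "real^'n^'n"
  assumes "\<And>i j. A $ i $ j \<in> \<rat>"
  shows "det A \<in> \<rat>"
  unfolding det_def using assms by (intro Rats_sum Rats_mult Rats_prod) auto

lemma rat_dep_mult:
  fixes Q :: "real^'n^'n" and v :: "real^'n"
  assumes Q: "rat_GL Q" and v: "rat_dependent v"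
  shows "rat_dependent (Q *v v)"
proof -
  from v obtain q where q: "int_vec q" "q \<noteq> 0" "q \<bullet> v = 0" by (auto simp: rat_dependent_def)
  have d0: "det (transpose Q) \<noteq> 0" using Q by (simp add: rat_GL_def invertible_det_nz)
  define y :: "real^'n" where "y = (\<chi> k. det(\<chi> i j. if j=k then q$i else (transpose Q)$i$j) / det (transpose Q))"
  have ty: "transpose Q *v y = q" using cramer[OF d0, of y q] by (simp add: y_def)
  have yr: "y $ i \<in> \<rat>" for i
  proof -
    have "q $ j \<in> \<rat>" for j using q(1) by (auto simp: int_vec_def Ints_subset_Rats[THEN subsetD])
    moreover have "Q $ i $ j \<in> \<rat>" for i j using Q by (simp add: rat_GL_def)
    ultimately show ?thesis unfolding y_def
      by (auto intro!: Rats_divide det_rat simp: transpose_def)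
  qed
  have "y \<noteq> 0" using ty q(2) by auto
  moreover have "y \<bullet> (Q *v v) = 0"
    using q(3) ty by (simp add: dot_lmul_matrix[symmetric])
  ultimately show ?thesis using rat_vec_dependent[of y] yr by blast
qed

lemma rat_dep_scale:
  assumes "rat_dependent (v::real^'n)"
  shows "rat_dependent (c *\<^sub>R v)"
  using assms by (auto simp: rat_dependent_def)


lemma interior_hyperplanes_empty:
  fixes c :: "nat \<Rightarrow> 'a::euclidean_space"
  assumes "\<And>i. i<n \<Longrightarrow> c i \<noteq> 0"
  shows "interior (\<Union>i<n. {x. c i \<bullet> x = 0}) = {}"
  using assms
proof (induction n)
  case 0 then show ?case by simp
next
  case (Suc n)
  have eq: "(\<Union>i<Suc n. {x. c i \<bullet> x = 0}) = (\<Union>i<n. {x. c i \<bullet> x = 0}) \<union> {x. c n \<bullet> x = 0}"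
    by (auto simp: lessThan_Suc)
  have cl: "closed (\<Union>i<n. {x. c i \<bullet> x = 0})"
    by (intro closed_UN) (auto intro: closed_hyperplane)
  show ?case unfolding eq
    using interior_closed_Un_empty_interior[OF cl, of "{x. c n \<bullet> x = 0}"] Suc by auto
qed

lemma not_forest:
  fixes M :: "nat \<Rightarrow> real^'n^'n" and v :: "nat \<Rightarrow> real^'n"
  assumes k: "0 < k" and inv: "\<And>i. i<k \<Longrightarrow> invertible (M i)"
    and v: "\<And>i. i<k \<Longrightarrow> v i \<noteq> 0 \<and> rat_dependent (v i)"
    and eq: "\<And>i j. i<k \<Longrightarrow> j<k \<Longrightarrow> M i *v v i = M j *v v j"
  shows "\<not> dense_forest (\<Union>i<k. shifted_lattice (M i) 0)"
proof -
  have "\<forall>i. \<exists>A. i<k \<longrightarrow> A ** M i = mat 1" using inv by (meson invertible_def)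
  then obtain A where A: "\<And>i. i<k \<Longrightarrow> A i ** M i = mat 1" by metis
  have "\<forall>i. \<exists>q. i<k \<longrightarrow> int_vec q \<and> q \<noteq> 0 \<and> q \<bullet> v i = 0" using v by (auto simp: rat_dependent_def)
  then obtain q where q: "\<And>i. i<k \<Longrightarrow> int_vec (q i) \<and> q i \<noteq> 0 \<and> q i \<bullet> v i = 0" by metis
  define c where "c i = q i v* A i" for i
  have cM: "c i \<bullet> (M i *v z) = q i \<bullet> z" if "i<k" for i z
    using A[OF that] by (simp add: c_def dot_lmul_matrix matrix_vector_mul_assoc)
  have c0: "c i \<noteq> 0" if "i<k" for i
  proof
    assume "c i = 0"
    hence "q i \<bullet> q i = 0" using cM[OF that, of "q i"] by simp
    thus False using q[OF that] by simp
  qed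
  define w where "w = M 0 *v v 0"
  have w0: "w \<noteq> 0"
  proof
    assume "w = 0"
    hence "A 0 *v (M 0 *v v 0) = 0" by (simp add: w_def)
    hence "v 0 = 0" using A[OF k] by (simp add: matrix_vector_mul_assoc)
    thus False using v[OF k] by simp
  qed
  have cw: "c i \<bullet> w = 0" if "i<k" for i
    using cM[OF that, of "v i"] q[OF that] eq[OF that k] by (simp add: w_def)
  have "interior (\<Union>i<k. {x. c i \<bullet> x = 0}) = {}"
    by (rule interior_hyperplanes_empty) (use c0 in auto)
  hence "(\<Union>i<k. {x. c i \<bullet> x = 0}) \<noteq> UNIV" by (metis interior_UNIV empty_not_UNIV)
  then obtain p0 where p0: "\<And>i. i<k \<Longrightarrow> c i \<bullet> p0 \<noteq> 0" by blast
  define B where "B = (\<Sum>i<k. \<bar>c i \<bullet> p0\<bar>)"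
  have Bi: "\<bar>c i \<bullet> p0\<bar> \<le> B" if "i<k" for i
    unfolding B_def by (rule member_le_sum) (use that in auto)
  have B0: "B > 0" using Bi[OF k] p0[OF k] by linarith
  define p where "p = (1 / (2*B)) *\<^sub>R p0"
  define \<gamma> where "\<gamma> i = \<bar>c i \<bullet> p\<bar>" for i
  have \<gamma>: "0 < \<gamma> i" "\<gamma> i \<le> 1/2" if "i<k" for i
    using p0[OF that] Bi[OF that] B0 by (auto simp: \<gamma>_def p_def field_simps abs_mult)
  have far: "\<gamma> i \<le> \<bar>c i \<bullet> p - m\<bar>" if "i<k" "m \<in> \<int>" for i m
  proof (cases "m = 0")
    case True then show ?thesis by (simp add: \<gamma>_def)
  next
    case False
    with \<open>m\<in>\<int>\<close> have "\<bar>m\<bar> \<ge> 1" by (metis Ints_nonzero_abs_ge1)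
    then show ?thesis using \<gamma>[OF that(1)] unfolding \<gamma>_def by linarith
  qed
  define \<rho> where "\<rho> i = \<gamma> i / (norm (c i) + 1)" for i
  have \<rho>: "\<rho> i > 0" if "i<k" for i using \<gamma>[OF that] unfolding \<rho>_def by (intro divide_pos_pos) (auto intro: add_nonneg_pos)
  define \<epsilon> where "\<epsilon> = Min (\<rho> ` {..<k})"
  have \<epsilon>0: "\<epsilon> > 0" unfolding \<epsilon>_def using \<rho> k by (subst Min_gr_iff) auto
  have \<epsilon>le: "\<epsilon> \<le> \<rho> i" if "i<k" for i unfolding \<epsilon>_def using that by (intro Min_le) auto
  show ?thesis unfolding dense_forest_def
  proof
    assume "\<forall>\<epsilon>>0. \<exists>V>0. \<forall>a b. dist a b = V \<longrightarrow>
      (\<exists>x\<in>closed_segment a b. \<exists>f\<in>(\<Union>i<k. shifted_lattice (M i) 0). dist x f < \<epsilon>)"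
    then obtain V where V: "V > 0" "\<And>a b. dist a b = V \<Longrightarrow>
      (\<exists>x\<in>closed_segment a b. \<exists>f\<in>(\<Union>i<k. shifted_lattice (M i) 0). dist x f < \<epsilon>)"
      using \<epsilon>0 by blast
    define b where "b = p + (V / norm w) *\<^sub>R w"
    have "dist p b = V" using V(1) w0 by (simp add: b_def dist_norm)
    then obtain x i f where x: "x \<in> closed_segment p b" and i: "i<k"
      and f: "f \<in> shifted_lattice (M i) 0" and d: "dist x f < \<epsilon>"
      using V(2) by blast
    from x obtain u where xu: "x = (1 - u) *\<^sub>R p + u *\<^sub>R b" by (auto simp: closed_segment_def)
    have cx: "c i \<bullet> x = c i \<bullet> p"
      using cw[OF i] by (simp add: xu b_def inner_add_right algebra_simps)
    from f obtain z where z: "int_vec z" "f = M i *v z" by (auto simp: shifted_lattice_def)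
    have "q i \<bullet> z \<in> \<int>" using z(1) q[OF i]
      by (auto simp: inner_vec_def int_vec_def intro!: Ints_sum Ints_mult)
    hence cf: "c i \<bullet> f \<in> \<int>" using cM[OF i] z(2) by simp
    have "\<gamma> i \<le> \<bar>c i \<bullet> (x - f)\<bar>" using far[OF i cf] cx by (simp add: inner_diff_right)
    also have "\<dots> \<le> norm (c i) * norm (x - f)" by (rule Cauchy_Schwarz_ineq2)
    also have "\<dots> \<le> norm (c i) * \<epsilon>" using d by (intro mult_left_mono) (auto simp: dist_norm)
    also have "\<dots> \<le> norm (c i) * \<rho> i" using \<epsilon>le[OF i] by (intro mult_left_mono) auto
    also have "\<dots> < \<gamma> i"
    proof -
      have "norm (c i) * \<rho> i = \<gamma> i * (norm (c i) / (norm (c i) + 1))"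
        by (simp add: \<rho>_def field_simps)
      also have "\<dots> < \<gamma> i * 1" using \<gamma>[OF i] by (intro mult_strict_left_mono) (auto simp: divide_less_eq, smt (verit) norm_ge_zero)
      finally show ?thesis by simp
    qed
    finally show False by simp
  qed
qed

theorem theorem1p1:
  fixes M :: "nat \<Rightarrow> real ^ 'n ^ 'n" and k :: nat
  assumes "CARD('n) \<ge> 2" and "k \<ge> 2" and "\<forall>i<k. invertible (M i)"
  shows "(\<not> (\<exists>v :: nat \<Rightarrow> real ^ 'n.
              (\<forall>i<k. v i \<noteq> 0 \<and> rat_dependent (v i)) \<and>
              (\<forall>i<k. \<forall>j<k. M i *v v i = M j *v v j)))
         \<longleftrightarrow>
         (\<forall>(g :: nat \<Rightarrow> real ^ 'n) M'. (\<forall>i<k. invertible (M' i)) \<and> same_class k M' M \<longrightarrow>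
              dense_forest (\<Union>i<k. shifted_lattice (M' i) (g i)))"
proof
  assume H: "\<not> (\<exists>v :: nat \<Rightarrow> real ^ 'n.
              (\<forall>i<k. v i \<noteq> 0 \<and> rat_dependent (v i)) \<and>
              (\<forall>i<k. \<forall>j<k. M i *v v i = M j *v v j))"
  show "\<forall>(g :: nat \<Rightarrow> real ^ 'n) M'. (\<forall>i<k. invertible (M' i)) \<and> same_class k M' M \<longrightarrow>
              dense_forest (\<Union>i<k. shifted_lattice (M' i) (g i))"
  proof (intro allI impI)
    fix g :: "nat \<Rightarrow> real^'n" and M' assume h: "(\<forall>i<k. invertible (M' i)) \<and> same_class k M' M"
    have "\<forall>i. \<exists>A. i<k \<longrightarrow> M' i ** A = mat 1" using h by (meson invertible_def)
    then obtain A where A: "\<And>i. i<k \<Longrightarrow> M' i ** A i = mat 1" by metis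
    have "\<forall>i. \<exists>c Q. i<k \<longrightarrow> c \<noteq> 0 \<and> rat_GL Q \<and> M' i = c *\<^sub>R (M i ** Q)"
      using h by (auto simp: same_class_def)
    then obtain c Q where cQ: "\<And>i. i<k \<Longrightarrow> c i \<noteq> 0 \<and> rat_GL (Q i) \<and> M' i = c i *\<^sub>R (M i ** Q i)"
      by metis
    show "dense_forest (\<Union>i<k. shifted_lattice (M' i) (g i))"
    proof (rule forest_main[of k M' A g])
      show "M' i ** A i = mat 1" if "i<k" for i using A[OF that] .
      fix d :: "real^'n" assume d0: "d \<noteq> 0"
      show "\<exists>i<k. \<not> rat_dependent (A i *v d)"
      proof (rule ccontr)
        assume "\<not> (\<exists>i<k. \<not> rat_dependent (A i *v d))"
        hence rd: "\<And>i. i<k \<Longrightarrow> rat_dependent (A i *v d)" by blast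
        define v where "v i = c i *\<^sub>R (Q i *v (A i *v d))" for i
        have Mv: "M i *v v i = d" if "i<k" for i
        proof -
          have "M i *v v i = c i *\<^sub>R ((M i ** Q i) *v (A i *v d))"
            unfolding v_def matrix_vector_mult_scaleR matrix_vector_mul_assoc[of "M i" "Q i"] ..
          also have "\<dots> = (c i *\<^sub>R (M i ** Q i)) *v (A i *v d)"
            by (rule scaleR_matrix_vector_assoc)
          also have "\<dots> = (M' i ** A i) *v d" using cQ[OF that] by (simp add: matrix_vector_mul_assoc)
          also have "\<dots> = d" using A[OF that] by simp
          finally show ?thesis .
        qed
        have "\<forall>i<k. v i \<noteq> 0 \<and> rat_dependent (v i)"
        proof (intro allI impI conjI)
          fix i assume i: "i<k"
          show "v i \<noteq> 0" using Mv[OF i] d0 by auto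
          show "rat_dependent (v i)" unfolding v_def
            using cQ[OF i] rat_dep_scale[OF rat_dep_mult[OF _ rd[OF i]]] by blast
        qed
        moreover have "\<forall>i<k. \<forall>j<k. M i *v v i = M j *v v j" using Mv by simp
        ultimately show False using notE[OF H, OF exI[of _ v]] by blast
      qed
    qed
  qed
next
  assume H2: "\<forall>(g :: nat \<Rightarrow> real ^ 'n) M'. (\<forall>i<k. invertible (M' i)) \<and> same_class k M' M \<longrightarrow>
              dense_forest (\<Union>i<k. shifted_lattice (M' i) (g i))"
  show "\<not> (\<exists>v :: nat \<Rightarrow> real ^ 'n.
              (\<forall>i<k. v i \<noteq> 0 \<and> rat_dependent (v i)) \<and>
              (\<forall>i<k. \<forall>j<k. M i *v v i = M j *v v j))"
  proof
    assume "\<exists>v :: nat \<Rightarrow> real ^ 'n.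
              (\<forall>i<k. v i \<noteq> 0 \<and> rat_dependent (v i)) \<and>
              (\<forall>i<k. \<forall>j<k. M i *v v i = M j *v v j)"
    then obtain v :: "nat \<Rightarrow> real^'n" where v: "\<forall>i<k. v i \<noteq> 0 \<and> rat_dependent (v i)"
      "\<forall>i<k. \<forall>j<k. M i *v v i = M j *v v j" by blast
    have I: "rat_GL (mat 1 :: real^'n^'n)"
      unfolding rat_GL_def
    proof
      show "invertible (mat 1 :: real^'n^'n)" unfolding invertible_def
        by (rule exI[of _ "mat 1"]) simp
    qed (auto simp: mat_def)
    have SC: "same_class k M M" unfolding same_class_def
    proof (intro allI impI)
      fix i assume "i<k"
      show "\<exists>c Q. c \<noteq> 0 \<and> rat_GL Q \<and> M i = c *\<^sub>R (M i ** Q)"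
        by (rule exI[of _ 1], rule exI[of _ "mat 1"]) (simp add: I)
    qed
    have "(\<forall>i<k. invertible (M i)) \<and> same_class k M M \<longrightarrow>
              dense_forest (\<Union>i<k. shifted_lattice (M i) 0)"
      using spec[OF spec[OF H2, of "\<lambda>_. 0"], of M] by simp
    hence DF: "dense_forest (\<Union>i<k. shifted_lattice (M i) 0)" using SC assms(3) by blast
    have k0: "0 < k" using assms(2) by simp
    have NDF: "\<not> dense_forest (\<Union>i<k. shifted_lattice (M i) 0)"
    proof (rule not_forest[of k M v, OF k0])
      show "invertible (M i)" if "i<k" for i using assms(3) that by blast
      show "v i \<noteq> 0 \<and> rat_dependent (v i)" if "i<k" for i using v(1) that by blast
      show "M i *v v i = M j *v v j" if "i<k" "j<k" for i j using v(2) that by blast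
    qed
    show False using DF NDF by contradiction
  qed
qed

end
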